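(* Let $T=\langle 1,b,c\rangle$ with $1<b<c$ and $\gcd(b,c)=1$. Then $\mathcal H_1=\mathrm L(c,1,b,0)$ is an L-shape related to $T$ with $(\delta,\theta)=(1,0)$, and the L-shape $$\mathcal H_2=\begin{cases}\mathrm L(b,2,2b-c,1)&\text{if }c<2b,\\ \mathrm L(b,1+\lfloor c/b\rfloor,b-r,1)&\text{if }c>2b,\text{ where }c=\lfloor c/b\rfloor b+r,\ 0\le r<b,\end{cases}$$ is related to $T$ with $(\delta,\theta)=(0,1)$.
   Context: $T=\langle a,b,c\rangle=\{xa+yb+zc:x,y,z\in\mathbb N\}$ (here $a=1$). For $(i,j)\in\mathbb N^2$ let $[\![i,j]\!]=[i,i+1)\times[j,j+1)\subset\mathbb R^2$. For integers $0\le w<l$, $0\le y<h$, the L-shape $\mathrm L(l,h,w,y)$ is the set of unit squares $[\![i,j]\!]$ with $0\le i<l$, $0\le j<h$, excluding those with $i\ge l-w$ and $j\ge h-y$ (it has $lh-wy$ squares). An L-shape $\mathcal H$ is related to $T$ if it consists of exactly $c$ squares, every residue class modulo $c$ equals $ia+jb \bmod c$ for exactly one $[\![i,j]\!]\in\mathcal H$, and for each $[\![i,j]\!]\in\mathcal H$, $ia+jb=\min\{sa+tb:(s,t)\in\mathbb N^2,\ sa+tb\equiv ia+jb \pmod c\}$. For an L-shape $\mathrm L(l,h,w,y)$, $\delta=(la-yb)/c$ and $\theta=(hb-wa)/c$. *)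

theory Defs
  imports Complex_Main "HOL-Number_Theory.Cong"
begin

text \<open>The unit square [[i,j]] is represented by the pair (i,j) of naturals.
  L(l,h,w,y) is the set of squares (i,j) with i<l, j<h, excluding those with
  i >= l-w and j >= h-y.\<close>
definition Lshape :: "nat \<Rightarrow> nat \<Rightarrow> nat \<Rightarrow> nat \<Rightarrow> (nat \<times> nat) set" where
  "Lshape l h w y = {(i, j). i < l \<and> j < h \<and> \<not> (i \<ge> l - w \<and> j \<ge> h - y)}"

definition related_Lshape :: "nat \<Rightarrow> nat \<Rightarrow> nat \<Rightarrow> nat \<Rightarrow> nat \<Rightarrow> nat \<Rightarrow> nat \<Rightarrow> bool" where
  "related_Lshape a b c l h w y \<longleftrightarrow>
     w < l \<and> y < h \<and>
     card (Lshape l h w y) = c \<and>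
     (\<forall>r < c. \<exists>!p. p \<in> Lshape l h w y \<and> (fst p * a + snd p * b) mod c = r) \<and>
     (\<forall>(i, j) \<in> Lshape l h w y.
        i * a + j * b =
          (LEAST v. \<exists>s t. v = s * a + t * b \<and> [s * a + t * b = i * a + j * b] (mod c)))"

definition Ldelta :: "nat \<Rightarrow> nat \<Rightarrow> nat \<Rightarrow> nat \<Rightarrow> nat \<Rightarrow> real" where
  "Ldelta a b c l y = (real l * real a - real y * real b) / real c"

definition Ltheta :: "nat \<Rightarrow> nat \<Rightarrow> nat \<Rightarrow> nat \<Rightarrow> nat \<Rightarrow> real" where
  "Ltheta a b c h w = (real h * real b - real w * real a) / real c"

end

theory Submission
  imports Defs
begin

lemma related_from_bij:
  assumes "w < l" "y < h"
    and bij: "bij_betw (\<lambda>p. fst p * 1 + snd p * b) (Lshape l h w y) {0..<c}"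
  shows "related_Lshape 1 b c l h w y"
proof -
  let ?f = "\<lambda>p. fst p * 1 + snd p * b"
  let ?S = "Lshape l h w y"
  have card: "card ?S = c" using bij_betw_same_card[OF bij] by simp
  have inj: "inj_on ?f ?S" and img: "?f ` ?S = {0..<c}" using bij by (auto simp: bij_betw_def)
  have uniq: "\<forall>r < c. \<exists>!p. p \<in> ?S \<and> ?f p mod c = r"
  proof (intro allI impI)
    fix r assume r: "r < c"
    then have "r \<in> ?f ` ?S" using img by auto
    then obtain p where p: "p \<in> ?S" "?f p = r" by auto
    show "\<exists>!p. p \<in> ?S \<and> ?f p mod c = r"
    proof (rule ex1I[of _ p])
      show "p \<in> ?S \<and> ?f p mod c = r" using p r by simp
    next
      fix p' assume p': "p' \<in> ?S \<and> ?f p' mod c = r"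
      have "?f p' \<in> {0..<c}" using p' img by blast
      then have "?f p' = r" using p' by simp
      then show "p' = p" using inj p p' by (metis (no_types, lifting) inj_onD)
    qed
  qed
  have least: "\<forall>(i, j) \<in> ?S. i * 1 + j * b =
          (LEAST v. \<exists>s t. v = s * 1 + t * b \<and> [s * 1 + t * b = i * 1 + j * b] (mod c))"
  proof (intro ballI, clarify)
    fix i j assume ij: "(i, j) \<in> ?S"
    have lt: "i * 1 + j * b < c" using img ij by force
    show "i * 1 + j * b =
          (LEAST v. \<exists>s t. v = s * 1 + t * b \<and> [s * 1 + t * b = i * 1 + j * b] (mod c))"
    proof (rule Least_equality[symmetric])
      show "\<exists>s t. i * 1 + j * b = s * 1 + t * b \<and> [s * 1 + t * b = i * 1 + j * b] (mod c)"
        by (rule exI[of _ i], rule exI[of _ j]) simp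
    next
      fix v assume "\<exists>s t. v = s * 1 + t * b \<and> [s * 1 + t * b = i * 1 + j * b] (mod c)"
      then have "v mod c = i * 1 + j * b" using lt by (auto simp: cong_def)
      then show "i * 1 + j * b \<le> v" by (metis mod_less_eq_dividend)
    qed
  qed
  show ?thesis unfolding related_Lshape_def
    using assms(1,2) card uniq least by simp
qed

theorem lemma12:
  fixes b c :: nat
  assumes "1 < b" and "b < c" and "coprime b c"
  shows "related_Lshape 1 b c c 1 b 0 \<and> Ldelta 1 b c c 0 = 1 \<and> Ltheta 1 b c 1 b = 0
    \<and> (c < 2 * b \<longrightarrow>
         related_Lshape 1 b c b 2 (2 * b - c) 1 \<and>
         Ldelta 1 b c b 1 = 0 \<and> Ltheta 1 b c 2 (2 * b - c) = 1)
    \<and> (2 * b < c \<longrightarrow>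
         related_Lshape 1 b c b (1 + c div b) (b - c mod b) 1 \<and>
         Ldelta 1 b c b 1 = 0 \<and> Ltheta 1 b c (1 + c div b) (b - c mod b) = 1)"
proof -
  have c0: "c > 0" using assms by simp
  have H1: "related_Lshape 1 b c c 1 b 0"
  proof (rule related_from_bij)
    show "b < c" by fact
    show "(0::nat) < 1" by simp
    show "bij_betw (\<lambda>p. fst p * 1 + snd p * b) (Lshape c 1 b 0) {0..<c}"
      by (rule bij_betw_byWitness[where f' = "\<lambda>v. (v, 0)"]) (auto simp: Lshape_def)
  qed
  have D1: "Ldelta 1 b c c 0 = 1" using c0 by (simp add: Ldelta_def)
  have T1: "Ltheta 1 b c 1 b = 0" by (simp add: Ltheta_def)
  have D0: "Ldelta 1 b c b 1 = 0" by (simp add: Ldelta_def)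
  have gfun: "\<And>v. fst (v mod b, v div b) * 1 + snd (v mod b, v div b) * b = v" by simp
  have H2: "related_Lshape 1 b c b 2 (2 * b - c) 1" if cl: "c < 2 * b"
  proof (rule related_from_bij)
    show "2 * b - c < b" using cl assms by simp
    show "(1::nat) < 2" by simp
    show "bij_betw (\<lambda>p. fst p * 1 + snd p * b) (Lshape b 2 (2 * b - c) 1) {0..<c}"
    proof (rule bij_betw_byWitness[where f' = "\<lambda>v. (v mod b, v div b)"])
      show "\<forall>p\<in>Lshape b 2 (2 * b - c) 1. ((fst p * 1 + snd p * b) mod b, (fst p * 1 + snd p * b) div b) = p"
        by (auto simp: Lshape_def)
      show "\<forall>v\<in>{0..<c}. fst (v mod b, v div b) * 1 + snd (v mod b, v div b) * b = v" by simp
      show "(\<lambda>p. fst p * 1 + snd p * b) ` Lshape b 2 (2 * b - c) 1 \<subseteq> {0..<c}"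
      proof clarify
        fix i j assume "(i, j) \<in> Lshape b 2 (2 * b - c) 1"
        then have "i < b" "j < 2" "\<not> (i \<ge> b - (2*b - c) \<and> j \<ge> 1)" by (auto simp: Lshape_def)
        then show "fst (i, j) * 1 + snd (i, j) * b \<in> {0..<c}"
          using assms cl by (cases j) auto
      qed
      show "(\<lambda>v. (v mod b, v div b)) ` {0..<c} \<subseteq> Lshape b 2 (2 * b - c) 1"
      proof clarify
        fix v assume v: "v \<in> {0..<c}"
        have b0: "b > 0" using assms by simp
        have "v div b < 2" using v cl by (simp add: div_less_iff_less_mult mult.commute)
        moreover have "v div b \<ge> 1 \<Longrightarrow> v mod b < c - b"
        proof -
          assume "v div b \<ge> 1"
          then have "v div b = 1" using \<open>v div b < 2\<close> by simp
          then have "v = b + v mod b" by (metis div_mult_mod_eq mult_1 add.commute)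
          then show ?thesis using v by simp
        qed
        ultimately show "(v mod b, v div b) \<in> Lshape b 2 (2 * b - c) 1"
          using b0 assms cl by (auto simp: Lshape_def)
      qed
    qed
  qed
  have T2: "Ltheta 1 b c 2 (2 * b - c) = 1" if cl: "c < 2 * b"
  proof -
    have "real (2 * b - c) = 2 * real b - real c" using cl by (simp add: of_nat_diff)
    then show ?thesis using c0 by (simp add: Ltheta_def)
  qed
  define q where "q = c div b"
  define r where "r = c mod b"
  have cqr: "c = q * b + r" unfolding q_def r_def by simp
  have b0: "b > 0" using assms by simp
  have r0: "r > 0"
  proof (rule ccontr)
    assume "\<not> r > 0"
    then have "b dvd c" unfolding r_def by auto
    then have "b dvd gcd b c" by simp
    then show False using assms by simp
  qed
  have rb: "r < b" unfolding r_def using b0 by simp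
  have H3: "related_Lshape 1 b c b (1 + c div b) (b - c mod b) 1" if cl: "2 * b < c"
  proof -
    have q2: "q \<ge> 2" using cl unfolding q_def
      by (metis div_le_mono mult.commute nonzero_mult_div_cancel_left b0 less_imp_le neq0_conv)
    have "related_Lshape 1 b c b (1 + q) (b - r) 1"
    proof (rule related_from_bij)
      show "b - r < b" using r0 rb by simp
      show "(1::nat) < 1 + q" using q2 by simp
      show "bij_betw (\<lambda>p. fst p * 1 + snd p * b) (Lshape b (1 + q) (b - r) 1) {0..<c}"
      proof (rule bij_betw_byWitness[where f' = "\<lambda>v. (v mod b, v div b)"])
        show "\<forall>p\<in>Lshape b (1 + q) (b - r) 1. ((fst p * 1 + snd p * b) mod b, (fst p * 1 + snd p * b) div b) = p"
          by (auto simp: Lshape_def)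
        show "\<forall>v\<in>{0..<c}. fst (v mod b, v div b) * 1 + snd (v mod b, v div b) * b = v" by simp
        show "(\<lambda>p. fst p * 1 + snd p * b) ` Lshape b (1 + q) (b - r) 1 \<subseteq> {0..<c}"
        proof clarify
          fix i j assume "(i, j) \<in> Lshape b (1 + q) (b - r) 1"
          then have ij: "i < b" "j \<le> q" "\<not> (i \<ge> r \<and> j \<ge> q)" using rb by (auto simp: Lshape_def)
          show "fst (i, j) * 1 + snd (i, j) * b \<in> {0..<c}"
          proof (cases "j = q")
            case True then show ?thesis using ij cqr by auto
          next
            case False
            then have "j + 1 \<le> q" using ij by simp
            then have "(j + 1) * b \<le> q * b" by (rule mult_le_mono1)
            then show ?thesis using ij cqr by simp
          qed
        qed
        show "(\<lambda>v. (v mod b, v div b)) ` {0..<c} \<subseteq> Lshape b (1 + q) (b - r) 1"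
        proof clarify
          fix v assume v: "v \<in> {0..<c}"
          have "v div b \<le> q" unfolding q_def using v by (simp add: div_le_mono)
          moreover have "v div b \<ge> q \<Longrightarrow> v mod b < r"
          proof -
            assume "v div b \<ge> q"
            then have "v div b = q" using \<open>v div b \<le> q\<close> by simp
            then have "v = q * b + v mod b" by (metis div_mult_mod_eq)
            then show ?thesis using v cqr by simp
          qed
          ultimately show "(v mod b, v div b) \<in> Lshape b (1 + q) (b - r) 1"
            using b0 rb by (auto simp: Lshape_def)
        qed
      qed
    qed
    then show ?thesis unfolding q_def r_def .
  qed
  have T3: "Ltheta 1 b c (1 + c div b) (b - c mod b) = 1"
  proof -
    have "real (b - r) = real b - real r" using rb by (simp add: of_nat_diff)
    moreover have "real c = real q * real b + real r" using cqr by (metis of_nat_add of_nat_mult)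
    ultimately have "real (1 + q) * real b - real (b - r) * 1 = real c" by (simp add: algebra_simps)
    then show ?thesis using c0 unfolding Ltheta_def q_def r_def by simp
  qed
  show ?thesis using H1 D1 T1 D0 H2 T2 H3 T3 by blast
qed

end
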